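(* Let $r,k$ be positive integers. The number of $r$-proper permutations $\pi\colon[k]\to[k]$ is at most $2^{(r+\log r)k}$.
   Context: $[k]=\{1,\dots,k\}$. A permutation $\pi\colon[k]\to[k]$ is called $r$-proper if for every $j\in[k]$, $|\{\ell\in[k]:\ \ell\le j,\ \pi(\ell)\ge j-1\}|\le r$. $\log$ is base $2$. *)

theory Defs
  imports Complex_Main "HOL-Combinatorics.Permutations"
begin

definition r_proper :: "nat \<Rightarrow> nat \<Rightarrow> (nat \<Rightarrow> nat) \<Rightarrow> bool" where
  "r_proper r k \<pi> \<longleftrightarrow>
     (\<forall>j\<in>{1..k}. card {l\<in>{1..k}. l \<le> j \<and> int (\<pi> l) \<ge> int j - 1} \<le> r)"

end

theory Submission
  imports Defs "HOL-Library.FuncSet"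
begin

definition Wset :: "(nat \<Rightarrow> nat) \<Rightarrow> nat \<Rightarrow> nat set" where
  "Wset p t = {v\<in>{1..t-2}. \<forall>l\<in>{1..t-1}. p l \<noteq> v}"

definition Uset :: "(nat \<Rightarrow> nat) \<Rightarrow> nat \<Rightarrow> nat set" where
  "Uset p t = {l\<in>{1..t}. t \<le> p l + 1}"

definition bcode :: "(nat \<Rightarrow> nat) \<Rightarrow> nat \<Rightarrow> nat" where
  "bcode p t = card {w\<in>Wset p t. w \<le> p t \<and> p t + 2 \<le> t}"

definition acode :: "(nat \<Rightarrow> nat) \<Rightarrow> nat \<Rightarrow> nat" where
  "acode p t = card {l'\<in>Uset p t. \<exists>l\<in>{1..t}. p l + 1 = t \<and> l' \<le> l}"

lemma rank_inj:
  fixes W :: "nat set"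
  assumes "finite W" "x \<in> W" "y \<in> W" "card {w\<in>W. w \<le> x} = card {w\<in>W. w \<le> y}"
  shows "x = y"
proof (rule ccontr)
  assume "x \<noteq> y"
  then consider "x < y" | "y < x" by linarith
  then show False
  proof cases
    case 1
    have "{w\<in>W. w \<le> x} \<subseteq> {w\<in>W. w \<le> y}" using 1 by auto
    moreover have "y \<notin> {w\<in>W. w \<le> x}" "y \<in> {w\<in>W. w \<le> y}" using 1 assms(1-3) by auto
    ultimately have "{w\<in>W. w \<le> x} \<subset> {w\<in>W. w \<le> y}" by blast
    then have "card {w\<in>W. w \<le> x} < card {w\<in>W. w \<le> y}"
      using assms(1) by (intro psubset_card_mono) auto
    then show False using assms by simp
  next
    case 2
    have "{w\<in>W. w \<le> y} \<subseteq> {w\<in>W. w \<le> x}" using 2 by auto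
    moreover have "x \<notin> {w\<in>W. w \<le> y}" "x \<in> {w\<in>W. w \<le> x}" using 2 assms(1-3) by auto
    ultimately have "{w\<in>W. w \<le> y} \<subset> {w\<in>W. w \<le> x}" by blast
    then have "card {w\<in>W. w \<le> y} < card {w\<in>W. w \<le> x}"
      using assms(1) by (intro psubset_card_mono) auto
    then show False using assms by simp
  qed
qed

lemma perm_range:
  assumes "p permutes {1..k}" "l \<in> {1..k}"
  shows "p l \<in> {1..k}"
  using assms by (metis permutes_in_image)

lemma perm_inj:
  assumes "p permutes {1..k}" "p a = p b"
  shows "a = b"
  using assms by (metis permutes_inj injD)

lemma perm_ne:
  assumes "p permutes {1..k}" "l \<noteq> t"
  shows "p l \<noteq> p t"
  using assms perm_inj by blast

lemma b_zero:
  assumes "p permutes {1..k}" "t \<in> {1..k}"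
  shows "bcode p t = 0 \<longleftrightarrow> \<not> (p t + 2 \<le> t)"
proof
  assume h: "bcode p t = 0"
  show "\<not> (p t + 2 \<le> t)"
  proof
    assume c: "p t + 2 \<le> t"
    have "p t \<in> {1..k}" using perm_range assms by blast
    moreover have "\<forall>l\<in>{1..t-1}. p l \<noteq> p t" 
    proof
      fix l assume "l \<in> {1..t-1}"
      then have "l \<noteq> t" by auto
      then show "p l \<noteq> p t" using perm_ne[OF assms(1)] by blast
    qed
    ultimately have "p t \<in> Wset p t" using c unfolding Wset_def by auto
    then have "p t \<in> {w\<in>Wset p t. w \<le> p t \<and> p t + 2 \<le> t}" using c by auto
    moreover have "finite {w\<in>Wset p t. w \<le> p t \<and> p t + 2 \<le> t}" unfolding Wset_def by auto
    ultimately have "bcode p t > 0" unfolding bcode_def using card_gt_0_iff by blast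
    then show False using h by simp
  qed
next
  assume "\<not> (p t + 2 \<le> t)"
  then show "bcode p t = 0" unfolding bcode_def by simp
qed

lemma W_eq:
  assumes IH: "\<forall>l\<in>{1..t-1}. \<forall>v\<in>{1..t-2}. (p l = v) = (q l = v)"
  shows "Wset p t = Wset q t"
  unfolding Wset_def using IH by (metis (no_types, lifting))

lemma U_eq:
  assumes p: "p permutes {1..k}" and q: "q permutes {1..k}" and t: "t \<in> {1..k}"
    and bc: "bcode p t = bcode q t"
    and IH: "\<forall>l\<in>{1..t-1}. \<forall>v\<in>{1..t-2}. (p l = v) = (q l = v)"
  shows "Uset p t = Uset q t"
proof -
  have "t \<le> p l + 1 \<longleftrightarrow> t \<le> q l + 1" if l: "l \<in> {1..t}" for l
  proof (cases "l = t")
    case True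
    then show ?thesis using b_zero[OF p t] b_zero[OF q t] bc by auto
  next
    case False
    then have l1: "l \<in> {1..t-1}" using l by auto
    have pl: "p l \<ge> 1" "q l \<ge> 1" using perm_range[OF p] perm_range[OF q] l t by fastforce+
    have "t \<le> p l + 1 \<longleftrightarrow> \<not> (\<exists>v\<in>{1..t-2}. p l = v)" using pl by auto
    moreover have "t \<le> q l + 1 \<longleftrightarrow> \<not> (\<exists>v\<in>{1..t-2}. q l = v)" using pl by auto
    ultimately show ?thesis using IH l1 by blast
  qed
  then show ?thesis unfolding Uset_def by auto
qed

lemma dir:
  assumes p: "p permutes {1..k}" and q: "q permutes {1..k}" and t: "t \<in> {1..k}"
    and bc: "bcode p t = bcode q t" and ac: "acode p t = acode q t"
    and IH: "\<forall>l\<in>{1..t-1}. \<forall>v\<in>{1..t-2}. (p l = v) = (q l = v)"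
    and l: "l \<in> {1..t}" and v: "v \<in> {1..t-1}" and pv: "p l = v"
  shows "q l = v"
proof -
  have WE: "Wset p t = Wset q t" using W_eq[OF IH] .
  have UE: "Uset p t = Uset q t" using U_eq[OF p q t bc IH] .
  consider "l \<le> t - 1 \<and> v \<le> t - 2" | "l = t \<and> v \<le> t - 2" | "v = t - 1" using l v by force
  then show ?thesis
  proof cases
    case 1
    then show ?thesis using IH l v pv by auto
  next
    case 2
    then have lt: "l = t" and c: "p t + 2 \<le> t" using pv v by auto
    have "bcode q t \<noteq> 0" using b_zero[OF p t] bc c by auto
    then have c': "q t + 2 \<le> t" using b_zero[OF q t] by auto
    have inW: "p t \<in> Wset p t"
    proof -
      have "p t \<in> {1..k}" using perm_range[OF p t] .
      moreover have "\<forall>l\<in>{1..t-1}. p l \<noteq> p t" 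
    proof
      fix l assume "l \<in> {1..t-1}"
      then have "l \<noteq> t" by auto
      then show "p l \<noteq> p t" using perm_ne[OF p] by blast
    qed
      ultimately show ?thesis using c unfolding Wset_def by auto
    qed
    have inW': "q t \<in> Wset q t"
    proof -
      have "q t \<in> {1..k}" using perm_range[OF q t] .
      moreover have "\<forall>l\<in>{1..t-1}. q l \<noteq> q t" 
    proof
      fix l assume "l \<in> {1..t-1}"
      then have "l \<noteq> t" by auto
      then show "q l \<noteq> q t" using perm_ne[OF q] by blast
    qed
      ultimately show ?thesis using c' unfolding Wset_def by auto
    qed
    have fin: "finite (Wset p t)" unfolding Wset_def by auto
    have "card {w\<in>Wset p t. w \<le> p t} = card {w\<in>Wset p t. w \<le> q t}"
      using bc c c' WE unfolding bcode_def by simp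
    then have "p t = q t" using rank_inj[OF fin inW] inW' WE by simp
    then show ?thesis using lt pv by simp
  next
    case 3
    have pl: "p l + 1 = t" using 3 pv v by auto
    have finU: "finite (Uset p t)" unfolding Uset_def by auto
    have lU: "l \<in> Uset p t" using pl l unfolding Uset_def by auto
    have setp: "{l'\<in>Uset p t. \<exists>l0\<in>{1..t}. p l0 + 1 = t \<and> l' \<le> l0} = {l'\<in>Uset p t. l' \<le> l}"
    proof -
      have uniq: "\<forall>l0. p l0 + 1 = t \<longrightarrow> l0 = l"
      proof (intro allI impI)
        fix l0 assume "p l0 + 1 = t"
        then have "p l0 = p l" using pl by simp
        then show "l0 = l" by (rule perm_inj[OF p])
      qed
      show ?thesis using uniq l pl by blast
    qed
    have "l \<in> {l'\<in>Uset p t. l' \<le> l}" using lU by simp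
    moreover have "finite {l'\<in>Uset p t. l' \<le> l}" using finU by simp
    ultimately have "acode p t > 0" unfolding acode_def setp using card_gt_0_iff by blast
    then have "acode q t > 0" using ac by simp
    then have "{l'\<in>Uset q t. \<exists>l0\<in>{1..t}. q l0 + 1 = t \<and> l' \<le> l0} \<noteq> {}"
      unfolding acode_def using card_gt_0_iff by blast
    then obtain l1 where l1: "l1 \<in> {1..t}" "q l1 + 1 = t" by blast
    have lU': "l1 \<in> Uset p t" using l1 UE unfolding Uset_def by auto
    have setq: "{l'\<in>Uset q t. \<exists>l0\<in>{1..t}. q l0 + 1 = t \<and> l' \<le> l0} = {l'\<in>Uset p t. l' \<le> l1}"
    proof -
      have uniq: "\<forall>l0. q l0 + 1 = t \<longrightarrow> l0 = l1"
      proof (intro allI impI)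
        fix l0 assume "q l0 + 1 = t"
        then have "q l0 = q l1" using l1 by simp
        then show "l0 = l1" by (rule perm_inj[OF q])
      qed
      show ?thesis using uniq l1 UE by blast
    qed
    have "card {l'\<in>Uset p t. l' \<le> l} = card {l'\<in>Uset p t. l' \<le> l1}"
      using ac unfolding acode_def setp setq .
    then have "l = l1" using rank_inj[OF finU lU lU'] by simp
    then show ?thesis using l1 3 by simp
  qed
qed

lemma code_inj:
  assumes p: "p permutes {1..k}" and q: "q permutes {1..k}"
    and eq: "\<forall>t\<in>{1..k}. acode p t = acode q t \<and> bcode p t = bcode q t"
  shows "p = q"
proof -
  have P: "t \<le> k \<Longrightarrow> \<forall>l\<in>{1..t}. \<forall>v\<in>{1..t-1}. (p l = v) = (q l = v)" for t
  proof (induction t)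
    case 0
    then show ?case by simp
  next
    case (Suc t)
    then have IH0: "\<forall>l\<in>{1..t}. \<forall>v\<in>{1..t-1}. (p l = v) = (q l = v)" by simp
    have IH: "\<forall>l\<in>{1..Suc t-1}. \<forall>v\<in>{1..Suc t-2}. (p l = v) = (q l = v)" using IH0 by simp
    have IH': "\<forall>l\<in>{1..Suc t-1}. \<forall>v\<in>{1..Suc t-2}. (q l = v) = (p l = v)" using IH by blast
    have tk: "Suc t \<in> {1..k}" using Suc.prems by simp
    have e: "acode p (Suc t) = acode q (Suc t)" "bcode p (Suc t) = bcode q (Suc t)" using eq tk by auto
    show ?case
    proof (intro ballI iffI)
      fix l v assume l: "l \<in> {1..Suc t}" and v: "v \<in> {1..Suc t - 1}"
      { assume "p l = v"
        then show "q l = v" using dir[OF p q tk e(2) e(1) IH l v] by simp }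
      { assume "q l = v"
        then show "p l = v" using dir[OF q p tk e(2)[symmetric] e(1)[symmetric] IH' l v] by simp }
    qed
  qed
  have Pk: "\<forall>l\<in>{1..k}. \<forall>v\<in>{1..k-1}. (p l = v) = (q l = v)" using P[of k] by simp
  show ?thesis
  proof
    fix x
    show "p x = q x"
    proof (cases "x \<in> {1..k}")
      case True
      have px: "p x \<in> {1..k}" and qx: "q x \<in> {1..k}" using perm_range[OF p True] perm_range[OF q True] by auto
      show ?thesis
      proof (cases "p x \<le> k - 1")
        case True
        then have "p x \<in> {1..k-1}" using px by auto
        then have "(p x = p x) = (q x = p x)" using Pk \<open>x \<in> {1..k}\<close> by blast
        then show ?thesis by simp
      next
        case False
        then have pk: "p x = k" using px by auto
        have "\<not> q x \<le> k - 1"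
        proof
          assume "q x \<le> k - 1"
          then have "q x \<in> {1..k-1}" using qx by auto
          then have "(p x = q x) = (q x = q x)" using Pk \<open>x \<in> {1..k}\<close> by blast
          then have "p x = q x" by simp
          then show False using False \<open>q x \<le> k - 1\<close> by simp
        qed
        then show ?thesis using pk qx by auto
      qed
    next
      case False
      then show ?thesis using p q by (simp add: permutes_not_in)
    qed
  qed
qed

lemma U_card:
  assumes "r_proper r k p" "t \<in> {1..k}"
  shows "card (Uset p t) \<le> r"
proof -
  have "Uset p t = {l\<in>{1..k}. l \<le> t \<and> int (p l) \<ge> int t - 1}"
    using assms(2) unfolding Uset_def by auto
  then show ?thesis using assms unfolding r_proper_def by auto
qed

lemma W_card:
  assumes p: "p permutes {1..k}" and t: "t \<in> {1..k}"
  shows "card (Wset p t) < card (Uset p t)"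
proof (cases "t = 1")
  case True
  then have "Wset p t = {}" unfolding Wset_def by auto
  moreover have "t \<in> Uset p t" using True unfolding Uset_def by auto
  moreover have "finite (Uset p t)" unfolding Uset_def by auto
  ultimately have "card (Uset p t) > 0" "card (Wset p t) = 0" using card_gt_0_iff by auto
  then show ?thesis by simp
next
  case False
  then have t2: "t \<ge> 2" using t by auto
  define A where "A = {1..t-1}"
  define B where "B = {l\<in>A. t \<le> p l + 1}"
  define C where "C = {l\<in>A. p l + 2 \<le> t}"
  have AB: "A = B \<union> C" "B \<inter> C = {}" unfolding A_def B_def C_def by auto
  have fA: "finite A" unfolding A_def by auto
  have fB: "finite B" "finite C" unfolding B_def C_def using fA by auto
  have cA: "card A = card B + card C" unfolding AB(1) using fB AB(2) by (rule card_Un_disjoint)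
  have cA2: "card A = t - 1" unfolding A_def by simp
  have pC: "p ` C = {1..t-2} - Wset p t"
  proof
    show "p ` C \<subseteq> {1..t-2} - Wset p t"
    proof
      fix v assume "v \<in> p ` C"
      then obtain l where l: "l \<in> C" "v = p l" by auto
      have "l \<in> {1..k}" using l t unfolding C_def A_def by auto
      then have "p l \<ge> 1" using perm_range[OF p] by fastforce
      then show "v \<in> {1..t-2} - Wset p t" using l unfolding C_def A_def Wset_def by auto
    qed
  next
    show "{1..t-2} - Wset p t \<subseteq> p ` C"
    proof
      fix v assume v: "v \<in> {1..t-2} - Wset p t"
      then obtain l where l: "l \<in> {1..t-1}" "p l = v" unfolding Wset_def by auto
      then have "l \<in> C" using v t2 unfolding C_def A_def by auto
      then show "v \<in> p ` C" using l by auto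
    qed
  qed
  have injC: "inj_on p C" using p permutes_inj inj_on_subset by blast
  have "card C = card ({1..t-2} - Wset p t)" using pC card_image[OF injC] by simp
  also have "\<dots> = (t - 2) - card (Wset p t)"
    by (subst card_Diff_subset) (auto simp: Wset_def)
  finally have cC: "card C = (t - 2) - card (Wset p t)" .
  have "card (Wset p t) \<le> card {1..t-2}" by (rule card_mono) (auto simp: Wset_def)
  then have "card (Wset p t) \<le> t - 2" by simp
  then have "card B = card (Wset p t) + 1" using cA cA2 cC t2 by linarith
  moreover have "card B \<le> card (Uset p t)"
    by (rule card_mono) (auto simp: Uset_def B_def A_def)
  ultimately show ?thesis by linarith
qed

lemma a_le: "acode p t \<le> card (Uset p t)"
  unfolding acode_def by (rule card_mono) (auto simp: Uset_def)

lemma b_le: "bcode p t \<le> card (Wset p t)"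
  unfolding bcode_def by (rule card_mono) (auto simp: Wset_def)

lemma count_bound:
  assumes "r \<ge> 1"
  shows "card {\<pi>. \<pi> permutes {1..k} \<and> r_proper r k \<pi>} \<le> ((r+1)*r)^k"
proof -
  define S where "S = {\<pi>. \<pi> permutes {1..k} \<and> r_proper r k \<pi>}"
  define code where "code = (\<lambda>\<pi>. restrict (\<lambda>t. (acode \<pi> t, bcode \<pi> t)) {1..k})"
  define T where "T = PiE {1..k} (\<lambda>_. {0..r} \<times> {0..<r})"
  have inj: "inj_on code S"
  proof
    fix p q assume "p \<in> S" "q \<in> S" "code p = code q"
    have "\<forall>t\<in>{1..k}. acode p t = acode q t \<and> bcode p t = bcode q t"
    proof
      fix t assume t: "t \<in> {1..k}"
      have "code p t = code q t" using \<open>code p = code q\<close> by simp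
      then show "acode p t = acode q t \<and> bcode p t = bcode q t" using t unfolding code_def by simp
    qed
    then show "p = q" using code_inj \<open>p \<in> S\<close> \<open>q \<in> S\<close> unfolding S_def by blast
  qed
  have img: "code ` S \<subseteq> T"
  proof
    fix c assume "c \<in> code ` S"
    then obtain p where p: "p \<in> S" "c = code p" by auto
    have "acode p t \<le> r \<and> bcode p t < r" if t: "t \<in> {1..k}" for t
    proof -
      have pp: "p permutes {1..k}" "r_proper r k p" using p unfolding S_def by auto
      have "card (Uset p t) \<le> r" using U_card[OF pp(2) t] .
      moreover have "card (Wset p t) < card (Uset p t)" using W_card[OF pp(1) t] .
      moreover note a_le[of p t] b_le[of p t]
      ultimately show ?thesis by linarith
    qed
    then show "c \<in> T" using p unfolding T_def code_def by auto
  qed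
  have "card S \<le> card T" using card_inj_on_le[OF inj img] unfolding T_def by (simp add: finite_PiE)
  also have "card T = ((r+1)*r)^k" unfolding T_def by (simp add: card_PiE card_cartesian_product)
  finally show ?thesis unfolding S_def .
qed

theorem lemma10:
  fixes r k :: nat
  assumes "r \<ge> 1" and "k \<ge> 1"
  shows "real (card {\<pi>. \<pi> permutes {1..k} \<and> r_proper r k \<pi>})
           \<le> 2 powr ((real r + log 2 (real r)) * real k)"
proof -
  have r0: "real r > 0" using assms by simp
  have e1: "(2::real) powr (real r + log 2 (real r)) = 2 ^ r * real r"
    using r0 by (simp add: powr_add powr_realpow)
  have e2: "(2::real) powr ((real r + log 2 (real r)) * real k) = (2 ^ r * real r) ^ k"
  proof -
    have "(2::real) powr ((real r + log 2 (real r)) * real k) = ((2::real) powr (real r + log 2 (real r))) powr real k"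
      by (simp add: powr_powr)
    also have "\<dots> = ((2::real) powr (real r + log 2 (real r))) ^ k"
      by (rule powr_realpow) simp
    finally show ?thesis using e1 by simp
  qed
  have "r + 1 \<le> 2 ^ r" using less_exp[of r] by linarith
  then have "real ((r+1)*r) \<le> 2 ^ r * real r"
  proof -
    have "real (r+1) \<le> 2 ^ r" using \<open>r + 1 \<le> 2 ^ r\<close> by (metis of_nat_le_iff of_nat_numeral of_nat_power)
    then have "real (r+1) * real r \<le> 2 ^ r * real r" by (rule mult_right_mono) simp
    then show ?thesis by (simp only: of_nat_mult)
  qed
  then have "real (((r+1)*r)^k) \<le> (2 ^ r * real r) ^ k"
    using power_mono[OF \<open>real ((r+1)*r) \<le> 2 ^ r * real r\<close>, of k] by simp
  moreover have "real (card {\<pi>. \<pi> permutes {1..k} \<and> r_proper r k \<pi>}) \<le> real (((r+1)*r)^k)"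
    using count_bound[OF assms(1), of k] of_nat_le_iff by blast
  ultimately show ?thesis using e2 by linarith
qed

end
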